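(* Let $d\ge1$ and let $f(t)=1+\sum_{i=1}^{d}\binom{x_i}{i}t^{i}$ be a polynomial of degree $d$ with positive real coefficients, where $x_i\ge i-1$ are real numbers, and suppose $x_d\ge d$. If all roots of $f(t)$ are real, then $x_1\ge x_2\ge\cdots\ge x_d$.
   Context: For real $x$ and integer $k\ge0$, $\binom{x}{k}=\frac{x(x-1)\cdots(x-k+1)}{k!}$; for each $k\ge1$ and real $y>0$ there is a unique real $x\ge k-1$ with $\binom{x}{k}=y$. *)

theory Defs
  imports "HOL-Analysis.Analysis" "HOL-Computational_Algebra.Polynomial"
begin

definition binpoly :: "nat \<Rightarrow> (nat \<Rightarrow> real) \<Rightarrow> real poly" where
  "binpoly d x = 1 + (\<Sum>i=1..d. monom (x i gchoose i) i)"

end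

theory Submission
  imports Defs "HOL-Complex_Analysis.Cauchy_Integral_Formula"
begin


definition realrooted :: "complex poly \<Rightarrow> bool" where
  "realrooted p \<longleftrightarrow> (\<forall>z. poly p z = 0 \<longrightarrow> z \<in> \<real>)"

lemma Im_inv_lin:
  fixes z :: complex and r :: complex
  assumes "r \<in> \<real>" "Im z \<noteq> 0"
  shows "Im z * Im (1 / (z - r)) < 0"
proof -
  have ne: "z - r \<noteq> 0" using assms by (auto simp: complex_is_Real_iff)
  have e: "Im (1 / (z - r)) = - Im z / (cmod (z - r))^2"
    using assms by (simp add: Im_divide' complex_is_Real_iff)
  have c: "(cmod (z - r))^2 > 0" using ne by simp
  have s: "(Im z)^2 > 0" using assms(2) by simp
  have "Im z * Im (1 / (z - r)) = - ((Im z)^2 / (cmod (z - r))^2)"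
    unfolding e by (simp add: power2_eq_square)
  also have "\<dots> < 0" using c s by simp
  finally show ?thesis .
qed

lemma GL_aux:
  "degree p = n \<Longrightarrow> n \<ge> 1 \<Longrightarrow> realrooted p \<Longrightarrow> Im z \<noteq> 0 \<Longrightarrow>
     poly p z \<noteq> 0 \<and> Im z * Im (poly (pderiv p) z / poly p z) < 0"
proof (induction n arbitrary: p)
  case 0 then show ?case by simp
next
  case (Suc n)
  have pz: "poly p z \<noteq> 0" using Suc.prems(3,4) by (auto simp: realrooted_def complex_is_Real_iff)
  obtain r where r: "poly p r = 0"
  proof -
    have "p \<noteq> 0" using Suc.prems(1) by auto
    then have "coeff p (Suc n) \<noteq> 0" using Suc.prems(1) by (metis leading_coeff_0_iff)
    then have ex: "\<exists>i\<in>{1..Suc n}. coeff p i \<noteq> 0" by (intro bexI[of _ "Suc n"]) auto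
    obtain r where r0: "(\<Sum>i\<le>Suc n. coeff p i * r^i) = 0"
      using fundamental_theorem_of_algebra[of "coeff p" "Suc n"] ex by blast
    have "poly p r = (\<Sum>i\<le>Suc n. coeff p i * r^i)" unfolding poly_altdef Suc.prems(1) ..
    then have "poly p r = 0" using r0 by simp
    then show ?thesis by (rule that)
  qed
  then have rR: "r \<in> \<real>" using Suc.prems(3) by (auto simp: realrooted_def)
  from r obtain q where pq: "p = [:-r,1:] * q" by (metis poly_eq_0_iff_dvd dvdE)
  have q0: "q \<noteq> 0" using pq Suc.prems(1) by auto
  have dq: "degree q = n" using Suc.prems(1) q0 unfolding pq by (subst (asm) degree_mult_eq) auto
  have realrootedq: "realrooted q" using Suc.prems(3) pq by (auto simp: realrooted_def)
  have qz: "poly q z \<noteq> 0" using pz pq by auto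
  have zr: "z - r \<noteq> 0" using pz pq by auto
  have der: "poly (pderiv p) z / poly p z = 1 / (z - r) + poly (pderiv q) z / poly q z"
  proof -
    have "poly (pderiv p) z = (z - r) * poly (pderiv q) z + poly q z"
      unfolding pq pderiv_mult by (simp add: pderiv_pCons algebra_simps)
    moreover have "poly p z = (z - r) * poly q z" unfolding pq by (simp add: algebra_simps)
    ultimately have "poly (pderiv p) z / poly p z = ((z - r) * poly (pderiv q) z + poly q z) / ((z - r) * poly q z)"
      by simp
    also have "\<dots> = ((z - r) * poly (pderiv q) z) / ((z - r) * poly q z) + poly q z / ((z - r) * poly q z)"
      by (rule add_divide_distrib)
    also have "\<dots> = poly (pderiv q) z / poly q z + 1 / (z - r)"
      using qz zr by simp
    finally show ?thesis by simp
  qed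
  have A: "Im z * Im (1 / (z - r)) < 0" using Im_inv_lin rR Suc.prems(4) by blast
  have B: "Im z * Im (poly (pderiv q) z / poly q z) \<le> 0"
  proof (cases "n = 0")
    case True
    then obtain c where "q = [:c:]" using dq by (metis degree_eq_zeroE)
    then show ?thesis by simp
  next
    case False
    then show ?thesis using Suc.IH[OF dq _ realrootedq Suc.prems(4)] by fastforce
  qed
  show ?case using pz A B der by (simp add: algebra_simps)
qed

lemma realrooted_pderiv: "degree p \<ge> 1 \<Longrightarrow> realrooted p \<Longrightarrow> realrooted (pderiv p)"
  unfolding realrooted_def
proof (intro allI impI)
  fix z assume "degree p \<ge> 1" "\<forall>z. poly p z = 0 \<longrightarrow> z \<in> \<real>" "poly (pderiv p) z = 0"
  then show "z \<in> \<real>" using GL_aux[of p "degree p" z] by (auto simp: realrooted_def complex_is_Real_iff)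
qed

lemma realrooted_higher: "m < degree p \<Longrightarrow> realrooted p \<Longrightarrow> realrooted ((pderiv ^^ m) p)"
proof (induction m)
  case 0 then show ?case by simp
next
  case (Suc m)
  have "degree ((pderiv ^^ m) p) \<ge> 1" using Suc.prems by (simp add: degree_higher_pderiv)
  then show ?case using Suc realrooted_pderiv by simp
qed

lemma realrooted_reflect: assumes "coeff p 0 \<noteq> 0" "realrooted p" shows "realrooted (reflect_poly p)"
  unfolding realrooted_def
proof (intro allI impI)
  fix z assume z: "poly (reflect_poly p) z = 0"
  have p0: "p \<noteq> 0" using assms by auto
  have "z \<noteq> 0" using z p0 by auto
  then have "poly p (inverse z) = 0" using z by (simp add: poly_reflect_poly_nz)
  then have "inverse z \<in> \<real>" using assms(2) by (auto simp: realrooted_def)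
  then show "z \<in> \<real>" by simp
qed

lemma quad_disc:
  fixes q :: "complex poly" and Q :: "nat \<Rightarrow> real"
  assumes "degree q = 2" "\<And>j. coeff q j = of_real (Q j)" "realrooted q"
  shows "4 * Q 0 * Q 2 \<le> (Q 1)^2"
proof (rule ccontr)
  assume "\<not> ?thesis"
  then have D: "4 * Q 0 * Q 2 - (Q 1)^2 > 0" by simp
  have Q2: "Q 2 \<noteq> 0" proof
    assume "Q 2 = 0"
    then have "coeff q (degree q) = 0" using assms(1,2) by simp
    then have "q = 0" by simp
    then show False using assms(1) by simp
  qed
  define s where "s = sqrt (4 * Q 0 * Q 2 - (Q 1)^2)"
  have s2: "s^2 = 4 * Q 0 * Q 2 - (Q 1)^2" using D by (simp add: s_def)
  have sp: "s > 0" using D by (simp add: s_def)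
  define z where "z = Complex (- Q 1 / (2 * Q 2)) (s / (2 * Q 2))"
  have pq: "poly q z = of_real (Q 0) + of_real (Q 1) * z + of_real (Q 2) * z^2"
    using assms(1,2) by (simp add: poly_altdef numeral_2_eq_2 atMost_Suc)
  have "poly q z = 0"
    unfolding pq
  proof (rule complex_eqI)
    show "Re (complex_of_real (Q 0) + complex_of_real (Q 1) * z + complex_of_real (Q 2) * z\<^sup>2) = Re 0"
      using Q2 s2 by (simp add: z_def power2_eq_square field_simps) algebra
    show "Im (complex_of_real (Q 0) + complex_of_real (Q 1) * z + complex_of_real (Q 2) * z\<^sup>2) = Im 0"
      using Q2 by (simp add: z_def power2_eq_square field_simps)
  qed
  moreover have "Im z \<noteq> 0" using sp Q2 by (simp add: z_def)
  ultimately show False using assms(3) by (auto simp: realrooted_def complex_is_Real_iff)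
qed

lemma poch_fact: "pochhammer (of_nat (Suc j)) m * fact j = (fact (j + m) :: 'a :: field_char_0)"
proof (induction m)
  case 0 then show ?case by simp
next
  case (Suc m)
  have "pochhammer (of_nat (Suc j)) (Suc m) * fact j = (of_nat (Suc j) + of_nat m) * (pochhammer (of_nat (Suc j)) m * fact j :: 'a)"
    by (simp add: pochhammer_rec')
  also have "\<dots> = fact (j + Suc m)" using Suc by (simp add: algebra_simps)
  finally show ?case .
qed

lemma hp: "fact j * coeff ((pderiv ^^ m) f) j = fact (j + m) * coeff f (j + m)"
  for f :: "complex poly"
  by (simp add: coeff_higher_pderiv poch_fact[symmetric] mult_ac)

lemma newton:
  fixes p :: "complex poly" and A :: "nat \<Rightarrow> real"
  assumes dp: "degree p = n" and realrootedp: "realrooted p" and cp: "\<And>j. coeff p j = of_real (A j)"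
    and k: "1 \<le> k" "k < n" and A0: "A (k - 1) \<noteq> 0"
  shows "A (k+1) * fact (k+1) * fact (n-k-1) * (A (k-1) * fact (k-1) * fact (n-k+1))
           \<le> (A k * fact k * fact (n-k))^2"
proof -
  obtain k' where kk: "k = Suc k'" using k by (cases k) auto
  define m where "m = n - k' - 2"
  have nn: "n = k' + m + 2" using k kk by (simp add: m_def)
  define g where "g = (pderiv ^^ k') p"
  have dg: "degree g = m + 2" using dp nn by (simp add: g_def degree_higher_pderiv)
  have g0: "coeff g 0 = fact k' * of_real (A k')"
    using hp[of 0 k' p] cp by (simp add: g_def)
  have g0nz: "coeff g 0 \<noteq> 0" using g0 A0 kk by simp
  have realrootedg: "realrooted g" unfolding g_def using realrooted_higher realrootedp dp nn by simp
  define h where "h = reflect_poly g"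
  have dh: "degree h = m + 2" using dg g0nz by (simp add: h_def)
  have realrootedh: "realrooted h" using realrooted_reflect g0nz realrootedg by (simp add: h_def)
  define q where "q = (pderiv ^^ m) h"
  have dq: "degree q = 2" using dh by (simp add: q_def degree_higher_pderiv)
  have realrootedq: "realrooted q" unfolding q_def using realrooted_higher realrootedh dh by simp
  have hc: "\<And>j. j \<le> 2 \<Longrightarrow> coeff h (j + m) = coeff g (2 - j)"
    using dg by (auto simp: h_def coeff_reflect_poly)
  define Q where "Q j = (if j \<le> 2 then fact (j + m) * fact (2 - j + k') * A (2 - j + k') / (fact j * fact (2 - j)) else 0)" for j
  have qR: "coeff q j = of_real (Q j)" for j
  proof (cases "j \<le> 2")
    case True
    have c1: "fact j * coeff q j = fact (j + m) * coeff h (j + m)" unfolding q_def by (rule hp)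
    have c2: "fact (2 - j) * coeff g (2 - j) = fact (2 - j + k') * coeff p (2 - j + k')" unfolding g_def by (rule hp)
    have e1: "coeff q j = fact (j + m) * coeff g (2 - j) / fact j"
      using c1 hc[OF True] by (simp add: eq_divide_eq mult.commute)
    have e2: "coeff g (2 - j) = fact (2 - j + k') * of_real (A (2 - j + k')) / fact (2 - j)"
      using c2 cp by (simp add: eq_divide_eq mult.commute)
    show ?thesis using True unfolding e1 e2 Q_def by (simp add: field_simps)
  next
    case False
    then show ?thesis using dq by (simp add: Q_def coeff_eq_0)
  qed
  have Q0: "Q 0 = fact m * fact (k' + 2) * A (k' + 2) / 2"
    by (simp add: Q_def add.commute)
  have Q1: "Q 1 = fact (m + 1) * fact (k' + 1) * A (k' + 1)"
    by (simp add: Q_def add.commute)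
  have Q2: "Q 2 = fact (m + 2) * fact k' * A k' / 2"
    by (simp add: Q_def add.commute)
  have "4 * Q 0 * Q 2 \<le> (Q 1)^2" using quad_disc dq qR realrootedq by blast
  then have I: "4 * (fact m * fact (k' + 2) * A (k' + 2) / 2) * (fact (m + 2) * fact k' * A k' / 2)
      \<le> (fact (m + 1) * fact (k' + 1) * A (k' + 1))^2" unfolding Q0 Q1 Q2 .
  have n1: "k + 1 = k' + 2" "n - k - 1 = m" "k - 1 = k'" "n - k + 1 = m + 2" "n - k = m + 1" "k = k' + 1"
    using kk nn by auto
  have alg: "4 * (a * b * c / 2) * (d * e * f / 2) = c * b * a * (f * e * d)" for a b c d e f :: real
    by (simp add: field_simps)
  have L: "A (k+1) * fact (k+1) * fact (n-k-1) * (A (k-1) * fact (k-1) * fact (n-k+1)) = A (k' + 2) * fact (k' + 2) * fact m * (A k' * fact k' * fact (m + 2))"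
    unfolding n1(1-5) by (simp add: numeral_2_eq_2)
  have R: "A k * fact k * fact (n-k) = fact (m + 1) * fact (k' + 1) * A (k' + 1)"
    unfolding n1(5) unfolding n1(6) by (simp only: mult_ac)
  have "A (k+1) * fact (k+1) * fact (n-k-1) * (A (k-1) * fact (k-1) * fact (n-k+1)) = A (k' + 2) * fact (k' + 2) * fact m * (A k' * fact k' * fact (m + 2))"
    by (rule L)
  also have "\<dots> = 4 * (fact m * fact (k' + 2) * A (k' + 2) / 2) * (fact (m + 2) * fact k' * A k' / 2)"
    by (rule alg[symmetric])
  also have "\<dots> \<le> (fact (m + 1) * fact (k' + 1) * A (k' + 1))^2" by (rule I)
  also have "\<dots> = (A k * fact k * fact (n-k))^2" unfolding R ..
  finally show ?thesis .
qed

lemma maclaurin: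
  fixes b :: "nat \<Rightarrow> real"
  assumes b0: "b 0 = 1" and bp: "\<And>j. j \<le> d \<Longrightarrow> b j > 0"
    and nw: "\<And>k. 1 \<le> k \<Longrightarrow> k < d \<Longrightarrow> b (k - 1) * b (k + 1) \<le> (b k)^2"
  shows "1 \<le> i \<Longrightarrow> i \<le> j \<Longrightarrow> j \<le> d \<Longrightarrow> ln (b j) / j \<le> ln (b i) / i"
proof -
  define L where "L j = ln (b j)" for j
  have nwL: "L (k - 1) + L (k + 1) \<le> 2 * L k" if "1 \<le> k" "k < d" for k
  proof -
    have p1: "0 < b (k - 1)" "0 < b (k + 1)" "0 < b k" using bp that by auto
    have "ln (b (k - 1) * b (k + 1)) \<le> ln ((b k)^2)"
      using nw[OF that] p1 by (subst ln_le_cancel_iff) auto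
    then show ?thesis using p1 by (simp add: L_def ln_mult ln_realpow)
  qed
  have cons: "j + 1 \<le> d \<Longrightarrow> real j * L (j + 1) \<le> real (j + 1) * L j" for j
  proof (induction j)
    case 0 then show ?case by (simp add: L_def b0)
  next
    case (Suc j)
    have IH: "real j * L (j + 1) \<le> real (j + 1) * L j" using Suc by simp
    have N: "L j + L (j + 2) \<le> 2 * L (j + 1)" using nwL[of "j + 1"] Suc.prems by simp
    have "real (j + 1) * (L j + L (j + 2)) \<le> real (j + 1) * (2 * L (j + 1))"
      using N by (intro mult_left_mono) auto
    then show ?case using IH by (simp add: algebra_simps)
  qed
  have G: "L (j + 1) / real (j + 1) \<le> L j / real j" if j: "1 \<le> j" "j + 1 \<le> d" for j
  proof -
    have pos: "real j * real (j + 1) > 0" using j by simp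
    have "real j * L (j + 1) / (real j * real (j + 1)) \<le> real (j + 1) * L j / (real j * real (j + 1))"
      using cons[OF j(2)] pos by (intro divide_right_mono) auto
    then show ?thesis using j by simp
  qed
  assume ij: "1 \<le> i" "i \<le> j" "j \<le> d"
  from ij(2,3) have "L j / real j \<le> L i / real i"
  proof (induction j rule: dec_induct)
    case base then show ?case by simp
  next
    case (step n)
    then show ?case using G[of n] ij(1) by simp
  qed
  then show ?thesis by (simp add: L_def)
qed

lemma ratio_mono:
  fixes y :: real
  assumes "y \<ge> real d" "m \<le> k" "k < d"
  shows "(y - m) / (real d - m) \<le> (y - k) / (real d - k)"
proof -
  have dk: "real d - k > 0" "real d - m > 0" using assms by auto
  have "(y - m) * (real d - k) \<le> (y - k) * (real d - m)"
  proof -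
    have "(y - k) * (real d - m) - (y - m) * (real d - k) = (y - real d) * (real k - real m)"
      by (simp add: algebra_simps)
    also have "\<dots> \<ge> 0" using assms by simp
    finally show ?thesis by simp
  qed
  then show ?thesis using dk by (simp add: divide_simps)
qed

definition Ssum :: "nat \<Rightarrow> real \<Rightarrow> nat \<Rightarrow> real" where
  "Ssum d y k = (\<Sum>m = 0..<k. ln ((y - real m) / (real d - real m)))"

lemma comb:
  fixes y :: real
  assumes y: "y \<ge> real d"
  shows "1 \<le> i \<Longrightarrow> i \<le> j \<Longrightarrow> j \<le> d \<Longrightarrow> Ssum d y i / i \<le> Ssum d y j / j"
proof -
  have cons: "real (k + 1) * Ssum d y k \<le> real k * Ssum d y (k + 1)" if k: "k + 1 \<le> d" for k
  proof -
    have "Ssum d y k \<le> (\<Sum>m = 0..<k. ln ((y - k) / (real d - k)))"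
      unfolding Ssum_def
    proof (rule sum_mono)
      fix m assume "m \<in> {0..<k}"
      then have mk: "m \<le> k" by simp
      have p: "(y - m) / (real d - m) > 0" using y mk k by (simp add: divide_pos_pos)
      show "ln ((y - m) / (real d - m)) \<le> ln ((y - k) / (real d - k))"
        using ratio_mono[OF y mk] k p by (subst ln_le_cancel_iff) (auto intro: less_le_trans)
    qed
    then have "Ssum d y k \<le> real k * ln ((y - k) / (real d - k))" by simp
    moreover have "Ssum d y (k + 1) = Ssum d y k + ln ((y - k) / (real d - k))" by (simp add: Ssum_def)
    ultimately show ?thesis by (simp add: algebra_simps)
  qed
  have G: "Ssum d y k / real k \<le> Ssum d y (k + 1) / real (k + 1)" if j: "1 \<le> k" "k + 1 \<le> d" for k
  proof -
    have pos: "real k * real (k + 1) > 0" using j by simp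
    have "real (k + 1) * Ssum d y k / (real k * real (k + 1)) \<le> real k * Ssum d y (k + 1) / (real k * real (k + 1))"
      using cons[OF j(2)] pos by (intro divide_right_mono) auto
    then show ?thesis using j by simp
  qed
  assume ij: "1 \<le> i" "i \<le> j" "j \<le> d"
  from ij(2,3) show "Ssum d y i / i \<le> Ssum d y j / j"
  proof (induction j rule: dec_induct)
    case base then show ?case by simp
  next
    case (step n)
    then show ?case using G[of n] ij(1) by simp
  qed
qed

lemma ln_ratio:
  fixes y :: real
  assumes y: "y \<ge> real d" and k: "k \<le> d"
  shows "ln ((y gchoose k) / (real d gchoose k)) = Ssum d y k"
proof -
  have "(y gchoose k) / (real d gchoose k) = ((y gchoose k) * fact k) / ((real d gchoose k) * fact k)"
    by simp
  also have "\<dots> = (\<Prod>m = 0..<k. y - m) / (\<Prod>m = 0..<k. real d - m)"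
    unfolding gbinomial_mult_fact' ..
  also have "\<dots> = (\<Prod>m = 0..<k. (y - m) / (real d - m))" by (simp add: prod_dividef)
  finally have e: "(y gchoose k) / (real d gchoose k) = (\<Prod>m = 0..<k. (y - m) / (real d - m))" .
  show ?thesis unfolding e Ssum_def
    by (rule ln_prod) (use y k in auto)
qed

lemma gchoose_strict_mono:
  fixes u v :: real
  assumes "i \<ge> 1" "u \<ge> real i - 1" "u < v"
  shows "(u gchoose i) < (v gchoose i)"
proof -
  have "(\<Prod>m = 0..<i. u - m) < (\<Prod>m = 0..<i. v - m)"
    by (rule prod_mono_strict[of 0]) (use assms in auto)
  then show ?thesis using gbinomial_mult_fact'[of u i] gbinomial_mult_fact'[of v i]
    by (metis fact_gt_zero mult_less_cancel_right_pos)
qed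


theorem mainTheorem3:
  fixes d :: nat and x :: "nat \<Rightarrow> real"
  assumes "d \<ge> 1"
    and "\<And>i. 1 \<le> i \<Longrightarrow> i \<le> d \<Longrightarrow> x i \<ge> real i - 1"
    and "\<And>i. 1 \<le> i \<Longrightarrow> i \<le> d \<Longrightarrow> (x i gchoose i) > 0"
    and "x d \<ge> real d"
    and "\<And>z::complex. poly (map_poly complex_of_real (binpoly d x)) z = 0 \<Longrightarrow> z \<in> \<real>"
  shows "\<forall>i j. 1 \<le> i \<longrightarrow> i \<le> j \<longrightarrow> j \<le> d \<longrightarrow> x j \<le> x i"
proof -
  define A where "A j = coeff (binpoly d x) j" for j
  have cA: "A j = (if j = 0 then 1 else if j \<le> d then x j gchoose j else 0)" for j
    unfolding A_def binpoly_def by (auto simp: coeff_sum coeff_monom coeff_1)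
  define F where "F = map_poly complex_of_real (binpoly d x)"
  have cF: "coeff F j = of_real (A j)" for j by (simp add: F_def A_def coeff_map_poly)
  have Apos: "j \<le> d \<Longrightarrow> A j > 0" for j using assms(3)[of j] by (simp add: cA)
  have dF: "degree F = d"
  proof (rule antisym)
    show "degree F \<le> d" by (rule degree_le) (simp add: cF cA)
    show "d \<le> degree F" by (rule le_degree) (use Apos[of d] in \<open>simp add: cF\<close>)
  qed
  have RRF: "realrooted F" using assms(5) by (simp add: realrooted_def F_def)
  define b where "b j = A j / (real d gchoose j)" for j
  have gd: "j \<le> d \<Longrightarrow> real d gchoose j = fact d / (fact j * fact (d - j))" for j
    by (metis binomial_fact binomial_gbinomial)
  have gdp: "j \<le> d \<Longrightarrow> real d gchoose j > 0" for j by (simp add: gd)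
  have b0: "b 0 = 1" by (simp add: b_def cA)
  have bp: "j \<le> d \<Longrightarrow> b j > 0" for j using Apos gdp by (simp add: b_def)
  have nw: "b (k - 1) * b (k + 1) \<le> (b k)^2" if k: "1 \<le> k" "k < d" for k
  proof -
    have N: "A (k+1) * fact (k+1) * fact (d-k-1) * (A (k-1) * fact (k-1) * fact (d-k+1))
           \<le> (A k * fact k * fact (d-k))^2"
    proof -
      have "k - 1 \<le> d" using k by arith
      then have "A (k - 1) > 0" by (rule Apos)
      then have "A (k - 1) \<noteq> 0" by simp
      then show ?thesis using newton[OF dF RRF cF k] by blast
    qed
    have e1: "d - (k - 1) = d - k + 1" "d - (k + 1) = d - k - 1" using k by auto
    have "b (k - 1) * b (k + 1) = A (k+1) * fact (k+1) * fact (d-k-1) * (A (k-1) * fact (k-1) * fact (d-k+1)) / (fact d)^2"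
    proof -
      have k1: "k - 1 \<le> d" "k + 1 \<le> d" using k by auto
      have b1: "b j = A j * (fact j * fact (d - j)) / fact d" if "j \<le> d" for j
        using that by (simp add: b_def gd)
      have "b (k - 1) * b (k + 1) = (A (k-1) * (fact (k-1) * fact (d-k+1)) / fact d) * (A (k+1) * (fact (k+1) * fact (d-k-1)) / fact d)"
        unfolding b1[OF k1(1)] b1[OF k1(2)] e1 ..
      then show ?thesis by (simp add: field_simps power2_eq_square)
    qed
    moreover have "(b k)^2 = (A k * fact k * fact (d-k))^2 / (fact d)^2"
      using k by (simp add: b_def gd power_divide mult.assoc)
    ultimately show ?thesis using N by (simp add: divide_right_mono)
  qed
  have mac: "1 \<le> i \<Longrightarrow> i \<le> j \<Longrightarrow> j \<le> d \<Longrightarrow> ln (b j) / j \<le> ln (b i) / i" for i j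
    using maclaurin[of b d, OF b0 bp nw] by blast
  have bx: "1 \<le> j \<Longrightarrow> j \<le> d \<Longrightarrow> b j = (x j gchoose j) / (real d gchoose j)" for j
    by (simp add: b_def cA)
  have key: "x j \<le> x i" if ij: "1 \<le> i" "i \<le> j" "j \<le> d" and xj: "x j \<ge> real d" for i j
  proof (rule ccontr)
    assume "\<not> x j \<le> x i"
    then have lt: "x i < x j" by simp
    have "(x i gchoose i) < (x j gchoose i)"
      using gchoose_strict_mono[OF ij(1) assms(2)[of i] lt] ij by simp
    then have "b i < (x j gchoose i) / (real d gchoose i)"
      using bx[of i] gdp[of i] ij by (simp add: divide_strict_right_mono)
    then have "ln (b i) < ln ((x j gchoose i) / (real d gchoose i))"
      using bp[of i] ij by (subst ln_less_cancel_iff) auto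
    also have "\<dots> = Ssum d (x j) i" using ln_ratio[OF xj, of i] ij by simp
    finally have l1: "ln (b i) < Ssum d (x j) i" .
    have "Ssum d (x j) i / i \<le> Ssum d (x j) j / j" using comb[OF xj ij] .
    also have "\<dots> = ln (b j) / j" using ln_ratio[OF xj, of j] bx[of j] ij by simp
    also have "\<dots> \<le> ln (b i) / i" using mac ij by blast
    finally have "Ssum d (x j) i \<le> ln (b i)" using ij(1) by (simp add: divide_right_mono_neg divide_le_cancel)
    then show False using l1 by simp
  qed
  have xd: "1 \<le> i \<Longrightarrow> i \<le> d \<Longrightarrow> x i \<ge> real d" for i using key[of i d] assms(4) by simp
  show ?thesis using key xd by (meson order_trans)
qed

end
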